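(* Let $G$ be a $\sigma$-compact locally compact Abelian group and $\Lambda\subset G$ relatively dense. The following are equivalent: (i) $\Lambda-\Lambda-\Lambda$ is locally finite; (ii) $\Lambda-\Lambda-\Lambda$ is uniformly discrete; (iii) $\Lambda$ is locally finite and there is a finite set $F\subset G$ with $\Lambda-\Lambda\subset\Lambda+F$.
   Context: Locally finite: $A\cap K$ finite for every compact $K$. Uniformly discrete: there is an open neighbourhood $U$ of $0$ with $(x+U)\cap A=\{x\}$ for all $x\in A$. Relatively dense: $\Lambda+K=G$ for some compact $K$. *)

theory Defs
  imports "HOL-Analysis.Analysis"
begin

definition sumset :: "'a::ab_group_add set \<Rightarrow> 'a set \<Rightarrow> 'a set" where
  "sumset A B = {a + b | a b. a \<in> A \<and> b \<in> B}"

definition diffset :: "'a::ab_group_add set \<Rightarrow> 'a set \<Rightarrow> 'a set" where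
  "diffset A B = {a - b | a b. a \<in> A \<and> b \<in> B}"

definition locally_finite_set :: "'a::topological_space set \<Rightarrow> bool" where
  "locally_finite_set A \<longleftrightarrow> (\<forall>K. compact K \<longrightarrow> finite (A \<inter> K))"

definition uniformly_discrete_set :: "'a::topological_ab_group_add set \<Rightarrow> bool" where
  "uniformly_discrete_set A \<longleftrightarrow>
     (\<exists>U. open U \<and> 0 \<in> U \<and> (\<forall>x\<in>A. ((\<lambda>u. x + u) ` U) \<inter> A = {x}))"

definition relatively_dense_set :: "'a::topological_ab_group_add set \<Rightarrow> bool" where
  "relatively_dense_set L \<longleftrightarrow> (\<exists>K. compact K \<and> sumset L K = UNIV)"

definition sigma_compact_space :: "'a::topological_space itself \<Rightarrow> bool" where
  "sigma_compact_space _ \<longleftrightarrow> (\<exists>K::nat \<Rightarrow> 'a set. (\<forall>n. compact (K n)) \<and> (\<Union>n. K n) = UNIV)"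

end

theory Submission
  imports Defs
begin

lemma open_transl:
  fixes V :: "'a::topological_ab_group_add set"
  assumes "open V" shows "open ((\<lambda>u. k + u) ` V)"
proof -
  have "(\<lambda>u. k + u) ` V = (\<lambda>y. y - k) -` V"
    by (auto simp: image_iff) (metis add.commute diff_add_cancel)
  moreover have "open ((\<lambda>y. y - k) -` V)"
    by (rule open_vimage[OF assms]) (intro continuous_intros)
  ultimately show ?thesis by simp
qed

lemma ud_imp_lf:
  fixes D :: "'a::{topological_ab_group_add, t2_space} set"
  assumes "uniformly_discrete_set D"
  shows "locally_finite_set D"
  unfolding locally_finite_set_def
proof (intro allI impI)
  fix K :: "'a set" assume K: "compact K"
  obtain U where U: "open U" "0 \<in> U" "\<And>x. x\<in>D \<Longrightarrow> ((\<lambda>u. x + u) ` U) \<inter> D = {x}"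
    using assms unfolding uniformly_discrete_set_def by blast
  have "open ((\<lambda>p. snd p - fst p) -` U)"
    by (rule open_vimage[OF U(1)]) (intro continuous_intros)
  moreover have "(0,0) \<in> (\<lambda>p::'a\<times>'a. snd p - fst p) -` U" using U(2) by simp
  ultimately obtain A B where AB: "open A" "open B" "(0,0) \<in> A \<times> B"
      "A \<times> B \<subseteq> (\<lambda>p::'a\<times>'a. snd p - fst p) -` U"
    by (rule open_prod_elim)
  define V where "V = A \<inter> B"
  have V: "open V" "0 \<in> V" using AB by (auto simp: V_def)
  have VU: "b - a \<in> U" if "a \<in> V" "b \<in> V" for a b
    using AB(4) that by (auto simp: V_def)
  have "K \<subseteq> (\<Union>k\<in>K. (\<lambda>u. k + u) ` V)"
    using V(2) by (auto intro!: bexI[of _ 0] simp: image_iff)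
  then obtain T where T: "T \<subseteq> K" "finite T" "K \<subseteq> (\<Union>k\<in>T. (\<lambda>u. k + u) ` V)"
    using compactE_image[OF K, of K "\<lambda>k. (\<lambda>u. k + u) ` V"] open_transl[OF V(1)] by blast
  have sub: "D \<inter> ((\<lambda>u. k + u) ` V) \<subseteq> {SOME x. x \<in> D \<inter> ((\<lambda>u. k + u) ` V)}" for k
  proof
    fix y assume y: "y \<in> D \<inter> ((\<lambda>u. k + u) ` V)"
    define x where "x = (SOME x. x \<in> D \<inter> ((\<lambda>u. k + u) ` V))"
    have x: "x \<in> D \<inter> ((\<lambda>u. k + u) ` V)" unfolding x_def using y by (rule someI)
    obtain v1 where v1: "v1 \<in> V" "x = k + v1" using x by auto
    obtain v2 where v2: "v2 \<in> V" "y = k + v2" using y by auto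
    have "v2 - v1 \<in> U" using VU v1 v2 by blast
    moreover have "y = x + (v2 - v1)" using v1 v2 by simp
    ultimately have "y \<in> ((\<lambda>u. x + u) ` U) \<inter> D" using y by auto
    then show "y \<in> {x}" using U(3) x by blast
  qed
  have "D \<inter> K \<subseteq> (\<Union>k\<in>T. D \<inter> ((\<lambda>u. k + u) ` V))" using T(3) by blast
  moreover have "finite (\<Union>k\<in>T. D \<inter> ((\<lambda>u. k + u) ` V))"
    using T(2) sub by (intro finite_UN_I) (auto intro: finite_subset)
  ultimately show "finite (D \<inter> K)" by (rule finite_subset)
qed

lemma lf_sumset:
  fixes L :: "'a::{topological_ab_group_add, t2_space} set"
  assumes "locally_finite_set L" "finite G"
  shows "locally_finite_set (sumset L G)"
  unfolding locally_finite_set_def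
proof (intro allI impI)
  fix K :: "'a set" assume K: "compact K"
  have "sumset L G \<inter> K \<subseteq> (\<Union>g\<in>G. (\<lambda>l. l + g) ` (L \<inter> (\<lambda>y. y - g) ` K))"
    by (auto simp: sumset_def image_iff) force
  moreover have "finite (L \<inter> (\<lambda>y. y - g) ` K)" for g
  proof -
    have "compact ((\<lambda>y. y - g) ` K)"
      by (rule compact_continuous_image[OF _ K]) (intro continuous_intros)
    then show ?thesis using assms(1) unfolding locally_finite_set_def by blast
  qed
  ultimately show "finite (sumset L G \<inter> K)"
    using assms(2) by (meson finite_UN_I finite_imageI finite_subset)
qed


lemma lf_D_imp:
  fixes L :: "'a::{topological_ab_group_add, t2_space} set"
  assumes lf: "locally_finite_set (diffset (diffset L L) L)"
    and rd: "relatively_dense_set L"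
  shows "locally_finite_set L \<and> (\<exists>F. finite F \<and> diffset L L \<subseteq> sumset L F)"
proof
  define D where "D = diffset (diffset L L) L"
  obtain K where K: "compact K" "sumset L K = UNIV" using rd unfolding relatively_dense_set_def by blast
  have "L \<noteq> {}" using K(2) unfolding sumset_def by auto
  then obtain l0 where l0: "l0 \<in> L" by blast
  have negD: "- l \<in> D" if "l \<in> L" for l
  proof -
    have "l0 - l0 \<in> diffset L L" using l0 unfolding diffset_def by blast
    then have "(l0 - l0) - l \<in> D" using that unfolding D_def diffset_def by blast
    then show ?thesis by simp
  qed
  show "locally_finite_set L" unfolding locally_finite_set_def
  proof (intro allI impI)
    fix C :: "'a set" assume C: "compact C"
    have "compact (uminus ` C)"
      by (rule compact_continuous_image[OF _ C]) (intro continuous_intros)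
    then have "finite (D \<inter> uminus ` C)" using lf unfolding D_def locally_finite_set_def by blast
    moreover have "uminus ` (L \<inter> C) \<subseteq> D \<inter> uminus ` C" using negD by auto
    ultimately have "finite (uminus ` (L \<inter> C))" by (rule finite_subset[rotated])
    then show "finite (L \<inter> C)" by (rule finite_imageD) (simp add: inj_on_def)
  qed
  have "finite (D \<inter> K)" using lf K(1) unfolding D_def locally_finite_set_def by blast
  moreover have "diffset L L \<subseteq> sumset L (D \<inter> K)"
  proof
    fix x assume x: "x \<in> diffset L L"
    have "x \<in> sumset L K" using K(2) by simp
    then obtain l k where lk: "l \<in> L" "k \<in> K" "x = l + k" unfolding sumset_def by blast
    have "k = x - l" using lk by simp
    then have "k \<in> D" using x lk unfolding D_def diffset_def by blast
    then show "x \<in> sumset L (D \<inter> K)" using lk unfolding sumset_def by blast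
  qed
  ultimately show "\<exists>F. finite F \<and> diffset L L \<subseteq> sumset L F" by blast
qed

lemma step_sub:
  fixes L :: "'a::ab_group_add set"
  assumes F: "diffset L L \<subseteq> sumset L F" and X: "X \<subseteq> sumset L G"
  shows "diffset X L \<subseteq> sumset L (sumset F G)"
proof
  fix z assume "z \<in> diffset X L"
  then obtain x y where xy: "x \<in> X" "y \<in> L" "z = x - y" unfolding diffset_def by blast
  obtain l g where lg: "l \<in> L" "g \<in> G" "x = l + g" using X xy(1) unfolding sumset_def by blast
  have "l - y \<in> diffset L L" using lg xy unfolding diffset_def by blast
  then obtain l' f where lf: "l' \<in> L" "f \<in> F" "l - y = l' + f" using F unfolding sumset_def by blast
  have "z = l' + (f + g)" using xy lg lf by (simp add: algebra_simps)
  then show "z \<in> sumset L (sumset F G)" using lf lg unfolding sumset_def by blast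
qed

lemma step_add:
  fixes L :: "'a::ab_group_add set"
  assumes F: "diffset L L \<subseteq> sumset L F" and l0: "l0 \<in> L" and X: "X \<subseteq> sumset L G"
  shows "sumset X L \<subseteq> sumset L ((\<lambda>(f,h,g). f - (h - l0) + g) ` (F \<times> F \<times> G))"
proof
  fix z assume "z \<in> sumset X L"
  then obtain x y where xy: "x \<in> X" "y \<in> L" "z = x + y" unfolding sumset_def by blast
  obtain l g where lg: "l \<in> L" "g \<in> G" "x = l + g" using X xy(1) unfolding sumset_def by blast
  have "l0 - y \<in> diffset L L" using l0 xy unfolding diffset_def by blast
  then obtain m h where mh: "m \<in> L" "h \<in> F" "l0 - y = m + h" using F unfolding sumset_def by blast
  have "l - m \<in> diffset L L" using lg mh unfolding diffset_def by blast
  then obtain l' f where lf: "l' \<in> L" "f \<in> F" "l - m = l' + f" using F unfolding sumset_def by blast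
  have y: "y = l0 - m - h" using mh by (simp add: algebra_simps)
  have "z = l' + (f - (h - l0) + g)" using xy lg lf y
    by (simp add: algebra_simps)
  moreover have "f - (h - l0) + g \<in> (\<lambda>(f,h,g). f - (h - l0) + g) ` (F \<times> F \<times> G)"
    using lf mh lg by force
  ultimately show "z \<in> sumset L ((\<lambda>(f,h,g). f - (h - l0) + g) ` (F \<times> F \<times> G))"
    using lf unfolding sumset_def by blast
qed


lemma iii_imp_ud:
  fixes L :: "'a::{topological_ab_group_add, t2_space} set"
  assumes lc: "locally_compact_space (euclidean :: 'a topology)"
    and rd: "relatively_dense_set L"
    and lfL: "locally_finite_set L" and F: "finite F" "diffset L L \<subseteq> sumset L F"
  shows "uniformly_discrete_set (diffset (diffset L L) L)"
proof -
  define D where "D = diffset (diffset L L) L"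
  obtain K where K: "compact K" "sumset L K = UNIV" using rd unfolding relatively_dense_set_def by blast
  have "L \<noteq> {}" using K(2) unfolding sumset_def by auto
  then obtain l0 where l0: "l0 \<in> L" by blast
  have P0: "L \<subseteq> sumset L {0}" unfolding sumset_def by auto
  have P1: "diffset L L \<subseteq> sumset L (sumset F {0})" by (rule step_sub[OF F(2) P0])
  have P2: "D \<subseteq> sumset L (sumset F (sumset F {0}))" unfolding D_def by (rule step_sub[OF F(2) P1])
  define G3 where "G3 = sumset F (sumset F (sumset F {0}))"
  have P3: "diffset D L \<subseteq> sumset L G3" unfolding G3_def by (rule step_sub[OF F(2) P2])
  define G4 where "G4 = (\<lambda>(f,h,g). f - (h - l0) + g) ` (F \<times> F \<times> G3)"
  have P4: "sumset (diffset D L) L \<subseteq> sumset L G4" unfolding G4_def by (rule step_add[OF F(2) l0 P3])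
  define G5 where "G5 = (\<lambda>(f,h,g). f - (h - l0) + g) ` (F \<times> F \<times> G4)"
  have P5: "sumset (sumset (diffset D L) L) L \<subseteq> sumset L G5" unfolding G5_def by (rule step_add[OF F(2) l0 P4])
  have finS: "finite (sumset A B)" if "finite A" "finite B" for A B :: "'a set"
  proof -
    have "sumset A B = (\<lambda>(a,b). a + b) ` (A \<times> B)" unfolding sumset_def by auto
    then show ?thesis using that by simp
  qed
  have "finite G3" unfolding G3_def using F(1) by (intro finS) auto
  then have "finite G4" unfolding G4_def using F(1) by simp
  then have "finite G5" unfolding G5_def using F(1) by simp
  define E where "E = sumset L G5"
  have lfE: "locally_finite_set E" unfolding E_def by (rule lf_sumset[OF lfL \<open>finite G5\<close>])
  have DD: "y - x \<in> E" if xD: "x \<in> D" and yD: "y \<in> D" for x y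
  proof -
    obtain a b c where x: "x = a - b - c" "a \<in> L" "b \<in> L" "c \<in> L"
      using xD unfolding D_def diffset_def by blast
    obtain d e f where y: "y = d - e - f" "d \<in> L" "e \<in> L" "f \<in> L"
      using yD unfolding D_def diffset_def by blast
    have "y - a \<in> diffset D L" using yD x unfolding diffset_def by blast
    then have "y - a + b \<in> sumset (diffset D L) L" using x unfolding sumset_def by blast
    then have "y - a + b + c \<in> sumset (sumset (diffset D L) L) L" using x unfolding sumset_def by blast
    moreover have "y - x = y - a + b + c" using x by (simp add: algebra_simps)
    ultimately show ?thesis using P5 unfolding E_def by (metis subsetD)
  qed
  obtain U C :: "'a set" where UC: "open U" "compact C" "0 \<in> U" "U \<subseteq> C"
  proof -
    have "\<exists>U K. openin euclidean U \<and> compactin euclidean K \<and> (0::'a) \<in> U \<and> U \<subseteq> K"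
      using lc unfolding locally_compact_space_def by simp
    then show ?thesis using that by auto
  qed
  have "finite (E \<inter> C)" using lfE UC(2) unfolding locally_finite_set_def by blast
  define W where "W = U - (E \<inter> C - {0})"
  have W: "open W" "0 \<in> W" unfolding W_def using UC \<open>finite (E \<inter> C)\<close>
    by (auto intro!: open_Diff finite_imp_closed)
  have "\<forall>x\<in>D. ((\<lambda>u. x + u) ` W) \<inter> D = {x}"
  proof
    fix x assume x: "x \<in> D"
    show "((\<lambda>u. x + u) ` W) \<inter> D = {x}"
    proof
      show "{x} \<subseteq> ((\<lambda>u. x + u) ` W) \<inter> D" using x W(2) by (auto intro!: image_eqI[of _ _ 0])
      show "((\<lambda>u. x + u) ` W) \<inter> D \<subseteq> {x}"
      proof
        fix y assume y: "y \<in> ((\<lambda>u. x + u) ` W) \<inter> D"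
        then obtain w where w: "w \<in> W" "y = x + w" by auto
        have "w = y - x" using w by simp
        then have "w \<in> E" using DD x y by auto
        moreover have "w \<in> C" using w UC unfolding W_def by auto
        ultimately have "w = 0" using w unfolding W_def by auto
        then show "y \<in> {x}" using w by simp
      qed
    qed
  qed
  then show ?thesis using W unfolding uniformly_discrete_set_def D_def by blast
qed


theorem lemma7p1:
  fixes \<Lambda> :: "'a::{topological_ab_group_add, t2_space} set"
  assumes lc: "locally_compact_space (euclidean :: 'a topology)"
    and sc: "sigma_compact_space TYPE('a)"
    and rd: "relatively_dense_set \<Lambda>"
  shows "(locally_finite_set (diffset (diffset \<Lambda> \<Lambda>) \<Lambda>)
            \<longleftrightarrow> uniformly_discrete_set (diffset (diffset \<Lambda> \<Lambda>) \<Lambda>))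
       \<and> (uniformly_discrete_set (diffset (diffset \<Lambda> \<Lambda>) \<Lambda>)
            \<longleftrightarrow> (locally_finite_set \<Lambda> \<and>
                 (\<exists>F. finite F \<and> diffset \<Lambda> \<Lambda> \<subseteq> sumset \<Lambda> F)))"
  using ud_imp_lf lf_D_imp[OF _ rd] iii_imp_ud[OF lc rd] by blast

end
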